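(* Let $H=(v_1,\dots,v_6)$ be an embedded equilateral hexagon, considered up to translations and rotations, whose action-angle coordinates $(d_1,d_2,d_3,\theta_1,\theta_2,\theta_3)$ for the $T_{135}$ triangulation are defined. If the Joint Chirality-Curl satisfies $J(H)=(1,-1)$ or $J(H)=(-1,-1)$, then $\theta_i\in(\pi,2\pi)$ for $i=1,2,3$.
   Context: An equilateral hexagon is an ordered 6-tuple $H=(v_1,\dots,v_6)$ in $\mathbb{R}^3$ with $\|v_i-v_{i+1}\|=1$ (indices mod 6), edges $e_i=[v_i,v_{i+1}]$, oriented $v_1\to v_2\to\cdots\to v_6\to v_1$; embedded means non-adjacent edges are disjoint and adjacent ones meet only at their common endpoint. Standard position: $v_1=0$, $v_3$ on the positive $x$-axis, $v_5$ in the $xy$-plane with positive $y$-coordinate. Action-angle coordinates ($T_{135}$ triangulation), defined when $v_1,v_3,v_5$ are not collinear and $0<d_i<2$: $d_1=\|v_3-v_1\|$, $d_2=\|v_5-v_3\|$, $d_3=\|v_1-v_5\|$; with $m_1,m_2,m_3$ the midpoints of $[v_1,v_3],[v_3,v_5],[v_5,v_1]$, $u_1,u_2,u_3$ the unit vectors in the $xy$-plane perpendicular to these segments pointing toward the opposite vertex of triangle $v_1v_3v_5$ (toward $v_5,v_1,v_3$ respectively), and $e_z=(0,0,1)$, the angles $\theta_i\in[0,2\pi)$ are determined by $v_{2i}=m_i+\tfrac12\sqrt{4-d_i^2}(\cos\theta_i\,u_i+\sin\theta_i\,e_z)$ (regular planar hexagon: all $\theta_i=\pi$). Joint Chirality-Curl: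 $curl(H)=\operatorname{sign}\big((v_3-v_1)\times(v_5-v_1)\cdot(v_2-v_1)\big)$. For $i=2,4,6$, $T_i$ is the open triangular disk with vertices $v_{i-1},v_i,v_{i+1}$, oriented by the right-hand rule (normal $(v_i-v_{i-1})\times(v_{i+1}-v_i)$), and $\Delta_i$ is the algebraic intersection number of $T_i$ with the oriented polygon $H$. Then $J(H)=(\Delta_2\Delta_4\Delta_6,\ \Delta_2^2\Delta_4^2\Delta_6^2\,curl(H))$. *)

theory Defs
  imports "HOL-Analysis.Analysis"
begin

text \<open>A hexagon is given by H :: nat => real^3; the vertex v_i is H (i mod 6),
  so v_1,...,v_5 are H 1,...,H 5 and v_6 = v_0 = H 0.  Indices are taken mod 6.\<close>

definition vx :: "(nat \<Rightarrow> real^3) \<Rightarrow> nat \<Rightarrow> real^3" where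
  "vx H i = H (i mod 6)"

definition edge :: "(nat \<Rightarrow> real^3) \<Rightarrow> nat \<Rightarrow> (real^3) set" where
  "edge H i = closed_segment (vx H i) (vx H (i + 1))"

definition equilateral_hex :: "(nat \<Rightarrow> real^3) \<Rightarrow> bool" where
  "equilateral_hex H \<longleftrightarrow> (\<forall>i\<in>{1..6}. dist (vx H i) (vx H (i + 1)) = 1)"

definition embedded_hex :: "(nat \<Rightarrow> real^3) \<Rightarrow> bool" where
  "embedded_hex H \<longleftrightarrow>
     (\<forall>i\<in>{1..6}. edge H i \<inter> edge H (i + 1) = {vx H (i + 1)}) \<and>
     (\<forall>i\<in>{1..6}. \<forall>j\<in>{1..6}. i \<noteq> j \<and> (i + 1) mod 6 \<noteq> j mod 6 \<and> (j + 1) mod 6 \<noteq> i mod 6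
        \<longrightarrow> edge H i \<inter> edge H j = {})"

definition diag_len :: "(nat \<Rightarrow> real^3) \<Rightarrow> nat \<Rightarrow> real" where
  "diag_len H i = dist (vx H (2*i - 1)) (vx H (2*i + 1))"

definition aa_defined :: "(nat \<Rightarrow> real^3) \<Rightarrow> bool" where
  "aa_defined H \<longleftrightarrow> \<not> collinear {vx H 1, vx H 3, vx H 5} \<and>
     (\<forall>i\<in>{1,2,3}. 0 < diag_len H i \<and> diag_len H i < 2)"

text \<open>The unit vector e_z of the standard position, expressed intrinsically: the unit normal of
  the plane of v1 v3 v5 oriented by (v3 - v1) x (v5 - v1).  In standard position this is (0,0,1).\<close>
definition ez :: "(nat \<Rightarrow> real^3) \<Rightarrow> real^3" where
  "ez H = (let n = cross3 (vx H 3 - vx H 1) (vx H 5 - vx H 1) in n /\<^sub>R norm n)"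

definition udir :: "(nat \<Rightarrow> real^3) \<Rightarrow> nat \<Rightarrow> real^3" where
  "udir H i = (let a = vx H (2*i - 1); b = vx H (2*i + 1); c = vx H (2*i + 3); m = midpoint a b in
     THE u. norm u = 1 \<and> u \<bullet> ez H = 0 \<and> u \<bullet> (b - a) = 0 \<and> u \<bullet> (c - m) > 0)"

definition theta :: "(nat \<Rightarrow> real^3) \<Rightarrow> nat \<Rightarrow> real" where
  "theta H i = (let a = vx H (2*i - 1); b = vx H (2*i + 1); m = midpoint a b; d = dist a b in
     THE \<theta>. 0 \<le> \<theta> \<and> \<theta> < 2*pi \<and>
       vx H (2*i) = m + ((1/2) * sqrt (4 - d\<^sup>2)) *\<^sub>R (cos \<theta> *\<^sub>R udir H i + sin \<theta> *\<^sub>R ez H))"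

definition curl :: "(nat \<Rightarrow> real^3) \<Rightarrow> real" where
  "curl H = sgn (cross3 (vx H 3 - vx H 1) (vx H 5 - vx H 1) \<bullet> (vx H 2 - vx H 1))"

definition tri :: "(nat \<Rightarrow> real^3) \<Rightarrow> nat \<Rightarrow> (real^3) set" where
  "tri H i = rel_interior (convex hull {vx H (i - 1), vx H i, vx H (i + 1)})"

definition tri_normal :: "(nat \<Rightarrow> real^3) \<Rightarrow> nat \<Rightarrow> real^3" where
  "tri_normal H i = cross3 (vx H i - vx H (i - 1)) (vx H (i + 1) - vx H i)"

text \<open>Algebraic intersection number of the oriented disk T_i with the oriented polygon H:
  each edge e_j meeting T_i contributes the sign of (normal of T_i) . (v_(j+1) - v_j)
  (an edge crosses the plane of T_i at most once unless it lies in that plane, in which case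
  the crossing is non-transversal and contributes 0).\<close>
definition Delta :: "(nat \<Rightarrow> real^3) \<Rightarrow> nat \<Rightarrow> real" where
  "Delta H i = (\<Sum>j\<in>{1..6}. if edge H j \<inter> tri H i \<noteq> {}
       then sgn (tri_normal H i \<bullet> (vx H (j + 1) - vx H j)) else 0)"

definition JCC :: "(nat \<Rightarrow> real^3) \<Rightarrow> real \<times> real" where
  "JCC H = (Delta H 2 * Delta H 4 * Delta H 6,
            (Delta H 2)\<^sup>2 * (Delta H 4)\<^sup>2 * (Delta H 6)\<^sup>2 * curl H)"

end

theory Submission
  imports Defs
begin

lemma decomp3:
  fixes w e f :: "real^3"
  assumes "e \<bullet> f = 0" "w \<bullet> f = 0" "e \<bullet> e = 1"
  shows "(f \<bullet> f) *\<^sub>R w = ((f \<bullet> f) * (w \<bullet> e)) *\<^sub>R e + (w \<bullet> (cross3 e f)) *\<^sub>R (cross3 e f)"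
  using assms unfolding cross3_def inner_vec_def sum_3 vec_eq_iff forall_3
  by (simp add: vector_def) algebra

lemma par3:
  fixes u e f :: "real^3"
  assumes "u \<bullet> e = 0" "u \<bullet> f = 0"
  shows "((cross3 e f) \<bullet> (cross3 e f)) *\<^sub>R u = (u \<bullet> (cross3 e f)) *\<^sub>R (cross3 e f)"
  using assms unfolding cross3_def inner_vec_def sum_3 vec_eq_iff forall_3
  by (simp add: vector_def) algebra

lemma par3b:
  fixes p q N w :: "real^3"
  assumes "N \<bullet> p = 0" "N \<bullet> q = 0"
  shows "((cross3 p q) \<bullet> w) * (N \<bullet> N) = ((cross3 p q) \<bullet> N) * (N \<bullet> w)"
  using assms unfolding cross3_def inner_vec_def sum_3 vec_eq_iff forall_3
  by (simp add: vector_def) algebra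

lemma cyc:
  fixes a b c :: "real^3"
  shows "cross3 (b - a) (c - a) = cross3 (c - b) (a - b)"
  unfolding cross3_def vec_eq_iff forall_3
  by (simp add: vector_def algebra_simps)
lemma triple_swap:
  fixes x y z :: "real^3"
  shows "cross3 x y \<bullet> z = x \<bullet> cross3 y z"
  unfolding cross3_def inner_vec_def sum_3 by (simp add: vector_def algebra_simps)

lemma mid_ww: "(v - midpoint a b) \<bullet> (v - midpoint a b) = ((v - a) \<bullet> (v - a) + (v - b) \<bullet> (v - b)) / 2 - ((b - a) \<bullet> (b - a)) / 4" for a b v :: "real^3"
  unfolding midpoint_def inner_vec_def sum_3 by (simp add: algebra_simps power2_eq_square divide_simps)
lemma mid_wf: "(v - midpoint a b) \<bullet> (b - a) = ((v - a) \<bullet> (v - a) - (v - b) \<bullet> (v - b)) / 2" for a b v :: "real^3"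
  unfolding midpoint_def inner_vec_def sum_3 by (simp add: algebra_simps power2_eq_square divide_simps)

lemma theta_gen:
  fixes a b c v N e U :: "real^3" and d :: real
  assumes N: "cross3 (b - a) (c - a) = N" "N \<noteq> 0"
    and e: "e = N /\<^sub>R norm N"
    and d: "d = dist a b" "0 < d" "d < 2"
    and va: "dist v a = 1" and vb: "dist v b = 1"
    and below: "N \<bullet> (v - a) < 0"
    and U: "U = (THE u. norm u = 1 \<and> u \<bullet> e = 0 \<and> u \<bullet> (b - a) = 0 \<and> u \<bullet> (c - midpoint a b) > 0)"
  shows "pi < (THE \<theta>. 0 \<le> \<theta> \<and> \<theta> < 2*pi \<and> v = midpoint a b + ((1/2) * sqrt (4 - d\<^sup>2)) *\<^sub>R (cos \<theta> *\<^sub>R U + sin \<theta> *\<^sub>R e))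
       \<and> (THE \<theta>. 0 \<le> \<theta> \<and> \<theta> < 2*pi \<and> v = midpoint a b + ((1/2) * sqrt (4 - d\<^sup>2)) *\<^sub>R (cos \<theta> *\<^sub>R U + sin \<theta> *\<^sub>R e)) < 2 * pi"
proof -
  define f where "f = b - a"
  define m where "m = midpoint a b"
  define g where "g = cross3 e f"
  have nN: "norm N > 0" using N by simp
  have Nf: "N \<bullet> f = 0" unfolding f_def using N(1) dot_cross_self(4)[of "b - a" "c - a"] 
    by (metis dot_cross_self(1))
  have ef: "e \<bullet> f = 0" using Nf e by simp
  have ee: "e \<bullet> e = 1" using e nN by (simp add: power2_norm_eq_inner[symmetric] power2_eq_square)

  have ff: "f \<bullet> f = d\<^sup>2" unfolding f_def d(1) dist_norm
    by (metis norm_minus_commute power2_norm_eq_inner)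
  have gg: "g \<bullet> g = d\<^sup>2"
  proof -
    have "(norm g)\<^sup>2 + (e \<bullet> f)\<^sup>2 = (norm e * norm f)\<^sup>2" unfolding g_def by (rule norm_cross_dot)
    moreover have "norm e = 1" using ee by (simp add: norm_eq_sqrt_inner)
    moreover have "(norm f)\<^sup>2 = d\<^sup>2" using ff by (simp add: power2_norm_eq_inner)
    ultimately show ?thesis using ef by (simp add: power2_norm_eq_inner)
  qed
  have ge: "g \<bullet> e = 0" unfolding g_def using dot_cross_self(1)[of e f] by (simp add: inner_commute)
  have gf: "g \<bullet> f = 0" unfolding g_def using dot_cross_self(3)[of e f] by simp
  have gcm: "g \<bullet> (c - m) = norm N"
  proof -
    have "c - m = (c - a) - (1/2) *\<^sub>R f" unfolding m_def f_def midpoint_def by (simp add: vec_eq_iff field_simps)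
    hence "g \<bullet> (c - m) = g \<bullet> (c - a) - (1/2) * (g \<bullet> f)" by (simp only: inner_diff_right inner_scaleR_right)
    also have "\<dots> = g \<bullet> (c - a)" using gf by simp
    also have "\<dots> = e \<bullet> N" unfolding g_def triple_swap f_def N(1) ..
    also have "\<dots> = norm N" using e nN by (simp add: power2_norm_eq_inner[symmetric] power2_eq_square)
    finally show ?thesis .
  qed
  define u0 where "u0 = (1/d) *\<^sub>R g"
  have ng: "norm g = d" using gg d(2) by (metis norm_eq_sqrt_inner real_sqrt_abs abs_of_pos)
  have U0: "U = u0"
    unfolding U
  proof (rule the_equality)
    show "norm u0 = 1 \<and> u0 \<bullet> e = 0 \<and> u0 \<bullet> (b - a) = 0 \<and> u0 \<bullet> (c - midpoint a b) > 0"
      using ng d(2) ge gf gcm nN unfolding u0_def f_def m_def by auto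
  next
    fix u assume u: "norm u = 1 \<and> u \<bullet> e = 0 \<and> u \<bullet> (b - a) = 0 \<and> u \<bullet> (c - midpoint a b) > 0"
    have p: "d\<^sup>2 *\<^sub>R u = (u \<bullet> g) *\<^sub>R g" using par3[of u e f] u gg unfolding g_def f_def by simp
    hence "d\<^sup>2 * norm u = \<bar>u \<bullet> g\<bar> * norm g" by (metis norm_scaleR abs_of_nonneg zero_le_power2)
    hence a1: "\<bar>u \<bullet> g\<bar> = d" using u ng d(2) by (simp add: power2_eq_square)
    have "d\<^sup>2 * (u \<bullet> (c - m)) = (u \<bullet> g) * norm N"
      using arg_cong[OF p, of "\<lambda>x. x \<bullet> (c - m)"] gcm by simp
    moreover have "u \<bullet> (c - m) > 0" using u m_def by simp
    ultimately have "u \<bullet> g > 0" using nN d(2)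
      by (metis mult_pos_pos zero_less_mult_pos2 zero_less_power)
    hence "u \<bullet> g = d" using a1 by simp
    have "u = (1/d\<^sup>2) *\<^sub>R (d\<^sup>2 *\<^sub>R u)" using d(2) by simp
    also have "\<dots> = (1/d\<^sup>2) *\<^sub>R (d *\<^sub>R g)" using p \<open>u \<bullet> g = d\<close> by simp
    also have "\<dots> = u0" unfolding u0_def using d(2) by (simp add: power2_eq_square)
    finally show "u = u0" .
  qed
  define w where "w = v - m"
  define r where "r = (1/2) * sqrt (4 - d\<^sup>2)"
  have "d * d < 2 * 2" using d(2,3) by (intro mult_strict_mono) auto
  hence d2: "d\<^sup>2 < 4" by (simp add: power2_eq_square)
  have r0: "r > 0" unfolding r_def using d2 by simp
  have rr: "r\<^sup>2 = 1 - d\<^sup>2/4" unfolding r_def using d2 by (simp add: power_mult_distrib power_divide)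
  have pa: "(v - a) \<bullet> (v - a) = 1" using va by (simp add: dist_norm power2_norm_eq_inner[symmetric])
  have pb: "(v - b) \<bullet> (v - b) = 1" using vb by (simp add: dist_norm power2_norm_eq_inner[symmetric])
  have wf0: "w \<bullet> f = ((v - a) \<bullet> (v - a) - (v - b) \<bullet> (v - b)) / 2"
    unfolding w_def m_def f_def by (rule mid_wf)
  have wf: "w \<bullet> f = 0" using wf0 pa pb by simp
  have ww0: "w \<bullet> w = ((v - a) \<bullet> (v - a) + (v - b) \<bullet> (v - b)) / 2 - (f \<bullet> f) / 4"
    unfolding w_def m_def f_def by (rule mid_ww)
  have ww: "w \<bullet> w = r\<^sup>2" using ww0 pa pb ff rr by simp
  define \<alpha> where "\<alpha> = w \<bullet> u0"
  define \<beta> where "\<beta> = w \<bullet> e"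
  have u0u0: "u0 \<bullet> u0 = 1" unfolding u0_def using gg d(2) by (simp add: power2_eq_square)
  have u0e: "u0 \<bullet> e = 0" unfolding u0_def using ge by simp
  have wdec: "w = \<alpha> *\<^sub>R u0 + \<beta> *\<^sub>R e"
  proof -
    have "d\<^sup>2 *\<^sub>R w = (d\<^sup>2 * (w \<bullet> e)) *\<^sub>R e + (w \<bullet> g) *\<^sub>R g"
      using decomp3[OF ef wf ee] ff unfolding g_def by simp
    moreover have "w = (1/d\<^sup>2) *\<^sub>R (d\<^sup>2 *\<^sub>R w)" using d(2) by simp
    ultimately have "w = (1/d\<^sup>2) *\<^sub>R ((d\<^sup>2 * (w \<bullet> e)) *\<^sub>R e + (w \<bullet> g) *\<^sub>R g)" by simp
    also have "\<dots> = \<alpha> *\<^sub>R u0 + \<beta> *\<^sub>R e" unfolding \<alpha>_def \<beta>_def u0_def using d(2)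
      by (simp add: scaleR_add_right power2_eq_square)
    finally show ?thesis .
  qed
  have ab: "\<alpha>\<^sup>2 + \<beta>\<^sup>2 = r\<^sup>2"
  proof -
    have "w \<bullet> w = \<alpha>\<^sup>2 + \<beta>\<^sup>2" 
      apply (subst (1 2) wdec) using u0u0 u0e ee
      by (simp add: inner_add_left inner_add_right inner_commute power2_eq_square)
    thus ?thesis using ww by simp
  qed
  have "(\<alpha>/r)\<^sup>2 + (\<beta>/r)\<^sup>2 = 1" using ab r0 by (simp add: power_divide add_divide_distrib[symmetric])
  then obtain t where t: "0 \<le> t" "t < 2*pi" "\<alpha>/r = cos t" "\<beta>/r = sin t" by (rule sincos_total_2pi)
  have ct: "r * cos t = \<alpha>" "r * sin t = \<beta>" using t r0 by (simp_all add: field_simps)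
  have th: "(THE \<theta>. 0 \<le> \<theta> \<and> \<theta> < 2*pi \<and> v = midpoint a b + ((1/2) * sqrt (4 - d\<^sup>2)) *\<^sub>R (cos \<theta> *\<^sub>R U + sin \<theta> *\<^sub>R e)) = t"
  proof (rule the_equality)
    show "0 \<le> t \<and> t < 2*pi \<and> v = midpoint a b + ((1/2) * sqrt (4 - d\<^sup>2)) *\<^sub>R (cos t *\<^sub>R U + sin t *\<^sub>R e)"
    proof -
      have "v = m + w" unfolding w_def by simp
      also have "\<dots> = m + r *\<^sub>R (cos t *\<^sub>R u0 + sin t *\<^sub>R e)"
        using wdec ct by (simp add: scaleR_add_right)
      finally show ?thesis using t U0 unfolding m_def r_def by simp
    qed
  next
    fix s assume s: "0 \<le> s \<and> s < 2*pi \<and> v = midpoint a b + ((1/2) * sqrt (4 - d\<^sup>2)) *\<^sub>R (cos s *\<^sub>R U + sin s *\<^sub>R e)"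
    hence ws: "w = (r * cos s) *\<^sub>R u0 + (r * sin s) *\<^sub>R e" unfolding w_def m_def r_def U0
      by (simp add: scaleR_add_right)
    have "\<alpha> = r * cos s" unfolding \<alpha>_def ws using u0u0 u0e inner_commute[of e u0]
      by (simp add: inner_add_left inner_add_right)
    moreover have "\<beta> = r * sin s" unfolding \<beta>_def ws using ee u0e inner_commute[of e u0]
      by (simp add: inner_add_left inner_add_right)
    ultimately have "cos s = cos t" "sin s = sin t" using ct r0 by auto
    then obtain n :: int where n: "s = t + 2 * pi * n" using sin_cos_eq_iff by metis
    have "\<bar>2 * pi * n\<bar> < 2 * pi * 1" using n s t by auto
    hence "\<bar>n\<bar> < 1" by (simp add: abs_mult)
    hence "n = 0" by simp
    thus "s = t" using n by simp
  qed
  have wexp: "w = (v - a) - (1/2) *\<^sub>R f" unfolding w_def m_def f_def midpoint_def by (simp add: vec_eq_iff field_simps)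
  have ve: "(v - a) \<bullet> e = (N \<bullet> (v - a)) / norm N"
    unfolding e inner_scaleR_right by (simp add: inner_commute divide_inverse)
  have "\<beta> = ((v - a) - (1/2) *\<^sub>R f) \<bullet> e" unfolding \<beta>_def using wexp by simp
  also have "\<dots> = (v - a) \<bullet> e - (1/2) * (f \<bullet> e)" by (simp only: inner_diff_left inner_scaleR_left)
  also have "\<dots> = (N \<bullet> (v - a)) / norm N" using ve ef by (simp add: inner_commute)
  finally have "\<beta> < 0" using below nN by (simp add: divide_less_0_iff)
  have "sin t = \<beta> / r" using t(4) by simp
  hence "sin t < 0" using \<open>\<beta> < 0\<close> r0 by (simp add: divide_less_0_iff)
  have "pi < t"
  proof (rule ccontr)
    assume "\<not> pi < t"
    hence "0 \<le> sin t" using t(1) by (intro sin_ge_zero) auto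
    thus False using \<open>sin t < 0\<close> by simp
  qed
  thus ?thesis using th t by simp
qed
lemma relint_lt:
  fixes N :: "real^3"
  assumes x: "x \<in> rel_interior (convex hull S)" and S: "\<forall>y\<in>S. N \<bullet> y \<le> c" and y0: "y0 \<in> S" "N \<bullet> y0 < c"
  shows "N \<bullet> x < c"
proof -
  have sub: "convex hull S \<subseteq> {y. N \<bullet> y \<le> c}"
    using S by (intro hull_minimal) (auto simp: convex_halfspace_le)
  have xh: "x \<in> convex hull S" using x rel_interior_subset by blast
  hence le: "N \<bullet> x \<le> c" using sub by blast
  have "y0 \<in> affine hull (convex hull S)" using y0(1) hull_subset[of S convex] hull_subset[of "convex hull S" affine] by blast
  then obtain m where m: "m > 1" "\<forall>e. e > 1 \<and> e \<le> m \<longrightarrow> (1 - e) *\<^sub>R y0 + e *\<^sub>R x \<in> convex hull S"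
    using convex_rel_interior_if[OF convex_convex_hull x] by blast
  have "(1 - m) *\<^sub>R y0 + m *\<^sub>R x \<in> convex hull S" using m by auto
  hence "N \<bullet> ((1 - m) *\<^sub>R y0 + m *\<^sub>R x) \<le> c" using sub by blast
  hence h: "(1 - m) * (N \<bullet> y0) + m * (N \<bullet> x) \<le> c" by (simp add: inner_add_right)
  show ?thesis
  proof (rule ccontr)
    assume "\<not> N \<bullet> x < c"
    hence "N \<bullet> x = c" using le by simp
    hence "(1 - m) * (N \<bullet> y0 - c) \<le> 0" using h by (simp add: algebra_simps)
    moreover have "(1 - m) * (N \<bullet> y0 - c) > 0" using m(1) y0(2) by (intro mult_neg_neg) auto
    ultimately show False by simp
  qed
qed

lemma relint_gt:
  fixes N :: "real^3"
  assumes x: "x \<in> rel_interior (convex hull S)" and S: "\<forall>y\<in>S. c \<le> N \<bullet> y" and y0: "y0 \<in> S" "c < N \<bullet> y0"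
  shows "c < N \<bullet> x"
  using relint_lt[of x S "-N" "-c" y0] assms by auto

lemma relint_eq:
  fixes N :: "real^3"
  assumes x: "x \<in> rel_interior (convex hull S)" and S: "\<forall>y\<in>S. N \<bullet> y = c"
  shows "N \<bullet> x = c"
proof -
  have sub: "convex hull S \<subseteq> {y. N \<bullet> y = c}"
    using S by (intro hull_minimal) (auto simp: convex_hyperplane)
  thus ?thesis using x rel_interior_subset by blast
qed

lemma seg_ge:
  fixes N :: "real^3"
  shows "x \<in> closed_segment p q \<Longrightarrow> c \<le> N \<bullet> p \<Longrightarrow> c \<le> N \<bullet> q \<Longrightarrow> c \<le> N \<bullet> x"
  using closed_segment_subset[of p "{y. c \<le> N \<bullet> y}" q] by (auto simp: convex_halfspace_ge)

lemma seg_le: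
  fixes N :: "real^3"
  shows "x \<in> closed_segment p q \<Longrightarrow> N \<bullet> p \<le> c \<Longrightarrow> N \<bullet> q \<le> c \<Longrightarrow> N \<bullet> x \<le> c"
  using closed_segment_subset[of p "{y. N \<bullet> y \<le> c}" q] by (auto simp: convex_halfspace_le)

lemma seg_eq_end:
  fixes N :: "real^3"
  assumes "x \<in> closed_segment p q" "N \<bullet> p = c" "N \<bullet> q < c" "N \<bullet> x = c"
  shows "x = p"
proof -
  obtain u where u: "0 \<le> u" "u \<le> 1" "x = (1 - u) *\<^sub>R p + u *\<^sub>R q" using assms(1) by (auto simp: in_segment)
  have "N \<bullet> x = (1 - u) * (N \<bullet> p) + u * (N \<bullet> q)" unfolding u(3) by (simp add: inner_add_right)
  hence "N \<bullet> x = c + u * (N \<bullet> q - c)" using assms(2) by (simp add: algebra_simps)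
  hence "u * (N \<bullet> q - c) = 0" using assms(4) by simp
  hence "u = 0" using assms(3) by simp
  thus ?thesis using u by simp
qed

lemma seg_eq_end2:
  fixes N :: "real^3"
  assumes "x \<in> closed_segment q p" "N \<bullet> p = c" "N \<bullet> q < c" "N \<bullet> x = c"
  shows "x = p"
  using seg_eq_end[of x p q N c] assms by (simp add: closed_segment_commute)

lemma vertex_notin:
  fixes a b c :: "real^3"
  assumes "a \<notin> closed_segment b c"
  shows "a \<notin> rel_interior (convex hull {a, b, c})"
proof -
  have "a \<notin> convex hull {b, c}" using assms by (simp add: segment_convex_hull)
  hence "a extreme_point_of (convex hull (insert a {b, c}))"
    by (intro extreme_point_of_convex_hull_insert) auto
  hence f: "{a} face_of convex hull {a, b, c}" by (simp add: face_of_singleton)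
  have "b \<in> convex hull {a, b, c}" by (simp add: hull_inc)
  moreover have "b \<noteq> a" using assms by auto
  ultimately have "{a} \<noteq> convex hull {a, b, c}" by auto
  thus ?thesis using face_of_disjoint_rel_interior[OF f] by auto
qed

lemma sgn_cancel:
  fixes A B k P Q NN :: real
  assumes "A * NN = k * P" "B * NN = k * Q" "NN > 0" "P > 0" "Q < 0"
  shows "sgn A + sgn B = 0"
proof -
  have "A = k * P / NN" "B = k * Q / NN" using assms by (simp_all add: field_simps)
  thus ?thesis using assms by (simp add: sgn_mult sgn_divide)
qed

lemma sum16: "(\<Sum>j\<in>{1..6::nat}. f j) = f 1 + f 2 + f 3 + f 4 + f 5 + f 6"
proof -
  have "{1..6::nat} = {1,2,3,4,5,6}" by auto
  thus ?thesis by (simp add: algebra_simps)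
qed

lemma Delta_expand: "Delta H i =
   (if edge H 1 \<inter> tri H i \<noteq> {} then sgn (tri_normal H i \<bullet> (vx H 2 - vx H 1)) else 0) +
   (if edge H 2 \<inter> tri H i \<noteq> {} then sgn (tri_normal H i \<bullet> (vx H 3 - vx H 2)) else 0) +
   (if edge H 3 \<inter> tri H i \<noteq> {} then sgn (tri_normal H i \<bullet> (vx H 4 - vx H 3)) else 0) +
   (if edge H 4 \<inter> tri H i \<noteq> {} then sgn (tri_normal H i \<bullet> (vx H 5 - vx H 4)) else 0) +
   (if edge H 5 \<inter> tri H i \<noteq> {} then sgn (tri_normal H i \<bullet> (vx H 6 - vx H 5)) else 0) +
   (if edge H 6 \<inter> tri H i \<noteq> {} then sgn (tri_normal H i \<bullet> (vx H 7 - vx H 6)) else 0)"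
  unfolding Delta_def sum16 by (simp add: eval_nat_numeral)

theorem mainTheorem3:
  fixes H :: "nat \<Rightarrow> real^3"
  assumes "equilateral_hex H"
    and "embedded_hex H"
    and "aa_defined H"
    and "JCC H = (1, -1) \<or> JCC H = (-1, -1)"
  shows "\<forall>i\<in>{1,2,3::nat}. pi < theta H i \<and> theta H i < 2 * pi"
proof -
  define N where "N = cross3 (vx H 3 - vx H 1) (vx H 5 - vx H 1)"
  define c where "c = N \<bullet> vx H 1"
  have v7[simp]: "vx H 7 = vx H 1" "vx H 9 = vx H 3" by (simp_all add: vx_def)
  have ncol: "\<not> collinear {vx H 1, vx H 3, vx H 5}" using assms(3) unfolding aa_defined_def by blast
  have "collinear {vx H 3, vx H 1, vx H 5} \<longleftrightarrow> collinear {0, vx H 3 - vx H 1, vx H 5 - vx H 1}"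
    by (rule collinear_3) (simp add: NO_MATCH_def)
  moreover have "{vx H 3, vx H 1, vx H 5} = {vx H 1, vx H 3, vx H 5}" by auto
  ultimately have N0: "N \<noteq> 0" unfolding N_def using ncol cross_eq_0 by metis
  have N3: "N \<bullet> vx H 3 = c"
  proof -
    have "N \<bullet> (vx H 3 - vx H 1) = 0" unfolding N_def
      using dot_cross_self(1)[of "vx H 3 - vx H 1" "vx H 5 - vx H 1"] by (simp add: inner_commute)
    thus ?thesis unfolding c_def by (simp add: inner_diff_right)
  qed
  have N5: "N \<bullet> vx H 5 = c"
  proof -
    have "N \<bullet> (vx H 5 - vx H 1) = 0" unfolding N_def
      using dot_cross_self(3)[of "vx H 3 - vx H 1" "vx H 5 - vx H 1"] by simp
    thus ?thesis unfolding c_def by (simp add: inner_diff_right)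
  qed
  have snd: "(Delta H 2)\<^sup>2 * (Delta H 4)\<^sup>2 * (Delta H 6)\<^sup>2 * curl H = -1"
    using assms(4) unfolding JCC_def by auto
  have D2: "Delta H 2 \<noteq> 0" and D4: "Delta H 4 \<noteq> 0" and D6: "Delta H 6 \<noteq> 0"
    using snd by auto
  have "curl H < 0"
  proof (rule ccontr)
    assume "\<not> curl H < 0"
    hence "0 \<le> (Delta H 2)\<^sup>2 * (Delta H 4)\<^sup>2 * (Delta H 6)\<^sup>2 * curl H" by simp
    thus False using snd by simp
  qed
  hence "N \<bullet> (vx H 2 - vx H 1) < 0" unfolding curl_def N_def by (simp add: sgn_less)
  hence N2: "N \<bullet> vx H 2 < c" unfolding c_def by (simp add: inner_diff_right)
  have emb1: "\<And>i j. i\<in>{1..6} \<Longrightarrow> j\<in>{1..6} \<Longrightarrow> i \<noteq> j \<Longrightarrow> (i + 1) mod 6 \<noteq> j mod 6 \<Longrightarrow> (j + 1) mod 6 \<noteq> i mod 6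
        \<Longrightarrow> edge H i \<inter> edge H j = {}" using assms(2) unfolding embedded_hex_def by blast
  have E51: "edge H 5 \<inter> edge H 1 = {}" by (rule emb1) auto
  have E64: "edge H 6 \<inter> edge H 4 = {}" by (rule emb1) auto
  have E24: "edge H 2 \<inter> edge H 4 = {}" by (rule emb1) auto
  have E35: "edge H 3 \<inter> edge H 5 = {}" by (rule emb1) auto
  have edge_eq: "edge H 1 = closed_segment (vx H 1) (vx H 2)" "edge H 2 = closed_segment (vx H 2) (vx H 3)"
    "edge H 3 = closed_segment (vx H 3) (vx H 4)" "edge H 4 = closed_segment (vx H 4) (vx H 5)"
    "edge H 5 = closed_segment (vx H 5) (vx H 6)" "edge H 6 = closed_segment (vx H 6) (vx H 1)"
    unfolding edge_def by (simp_all only: one_add_one numeral_plus_one semiring_norm v7)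
  have A: "N \<bullet> vx H 4 < c \<or> N \<bullet> vx H 6 < c"
  proof (rule ccontr)
    assume "\<not> (N \<bullet> vx H 4 < c \<or> N \<bullet> vx H 6 < c)"
    hence h4: "c \<le> N \<bullet> vx H 4" and h6: "c \<le> N \<bullet> vx H 6" by auto
    have tri2: "tri H 2 = rel_interior (convex hull {vx H 1, vx H 2, vx H 3})" unfolding tri_def by simp
    have T2: "\<forall>x\<in>tri H 2. N \<bullet> x < c"
      unfolding tri2 using relint_lt[of _ "{vx H 1, vx H 2, vx H 3}" N c "vx H 2"] N2 N3 c_def by auto
    have z1: "tri_normal H 2 \<bullet> (vx H 2 - vx H 1) = 0" unfolding tri_normal_def
      using dot_cross_self(1)[of "vx H 2 - vx H 1" "vx H 3 - vx H 2"] by (simp add: inner_commute)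
    have z2: "tri_normal H 2 \<bullet> (vx H 3 - vx H 2) = 0" unfolding tri_normal_def
      using dot_cross_self(3)[of "vx H 2 - vx H 1" "vx H 3 - vx H 2"] by simp
    have e3: "edge H 3 \<inter> tri H 2 = {}" unfolding edge_eq
      using T2 seg_ge[of _ "vx H 3" "vx H 4" c N] N3 h4 by fastforce
    have e4: "edge H 4 \<inter> tri H 2 = {}" unfolding edge_eq
      using T2 seg_ge[of _ "vx H 4" "vx H 5" c N] N5 h4 by fastforce
    have e5: "edge H 5 \<inter> tri H 2 = {}" unfolding edge_eq
      using T2 seg_ge[of _ "vx H 5" "vx H 6" c N] N5 h6 by fastforce
    have e6: "edge H 6 \<inter> tri H 2 = {}" unfolding edge_eq
      using T2 seg_ge[of _ "vx H 6" "vx H 1" c N] c_def h6 by fastforce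
    have "Delta H 2 = 0" unfolding Delta_expand using z1 z2 e3 e4 e5 e6 by simp
    thus False using D2 by simp
  qed
  have B: "N \<bullet> vx H 6 < c" if h4: "N \<bullet> vx H 4 < c"
  proof (rule ccontr)
    assume "\<not> N \<bullet> vx H 6 < c"
    hence h6: "c \<le> N \<bullet> vx H 6" by simp
    have tri6: "tri H 6 = rel_interior (convex hull {vx H 5, vx H 6, vx H 1})" unfolding tri_def by simp
    have n6: "tri_normal H 6 = cross3 (vx H 6 - vx H 5) (vx H 1 - vx H 6)" unfolding tri_normal_def by simp
    have z5: "tri_normal H 6 \<bullet> (vx H 6 - vx H 5) = 0" unfolding n6
      using dot_cross_self(1)[of "vx H 6 - vx H 5" "vx H 1 - vx H 6"] by (simp add: inner_commute)
    have z6: "tri_normal H 6 \<bullet> (vx H 1 - vx H 6) = 0" unfolding n6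
      using dot_cross_self(3)[of "vx H 6 - vx H 5" "vx H 1 - vx H 6"] by simp
    have "Delta H 6 = 0"
    proof (cases "N \<bullet> vx H 6 = c")
      case False
      hence h6': "c < N \<bullet> vx H 6" using h6 by simp
      have T6: "\<forall>x\<in>tri H 6. c < N \<bullet> x"
        unfolding tri6 using relint_gt[of _ "{vx H 5, vx H 6, vx H 1}" c N "vx H 6"] h6' N5 c_def by auto
      have e1: "edge H 1 \<inter> tri H 6 = {}" unfolding edge_eq
        using T6 seg_le[of _ "vx H 1" "vx H 2" N c] c_def N2 by fastforce
      have e2: "edge H 2 \<inter> tri H 6 = {}" unfolding edge_eq
        using T6 seg_le[of _ "vx H 2" "vx H 3" N c] N3 N2 by fastforce
      have e3: "edge H 3 \<inter> tri H 6 = {}" unfolding edge_eq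
        using T6 seg_le[of _ "vx H 3" "vx H 4" N c] N3 h4 by fastforce
      have e4: "edge H 4 \<inter> tri H 6 = {}" unfolding edge_eq
        using T6 seg_le[of _ "vx H 4" "vx H 5" N c] N5 h4 by fastforce
      show ?thesis unfolding Delta_expand using z5 z6 e1 e2 e3 e4 by simp
    next
      case True
      have T6: "\<forall>x\<in>tri H 6. N \<bullet> x = c"
        unfolding tri6 using relint_eq[of _ "{vx H 5, vx H 6, vx H 1}" N c] True N5 c_def by auto
      have "vx H 1 \<in> edge H 1" unfolding edge_eq by simp
      hence "vx H 1 \<notin> closed_segment (vx H 5) (vx H 6)" using E51 unfolding edge_eq by auto
      hence "vx H 1 \<notin> rel_interior (convex hull {vx H 1, vx H 5, vx H 6})" by (rule vertex_notin)
      moreover have "{vx H 1, vx H 5, vx H 6} = {vx H 5, vx H 6, vx H 1}" by auto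
      ultimately have v1n: "vx H 1 \<notin> tri H 6" unfolding tri6 by simp
      have "vx H 5 \<in> edge H 4" unfolding edge_eq by simp
      hence "vx H 5 \<notin> closed_segment (vx H 6) (vx H 1)" using E64 unfolding edge_eq by auto
      hence v5n: "vx H 5 \<notin> tri H 6" unfolding tri6 by (rule vertex_notin)
      have e1: "edge H 1 \<inter> tri H 6 = {}" unfolding edge_eq
        using T6 seg_eq_end[of _ "vx H 1" "vx H 2" N c] c_def N2 v1n by fastforce
      have e4: "edge H 4 \<inter> tri H 6 = {}" unfolding edge_eq
        using T6 seg_eq_end2[of _ "vx H 4" "vx H 5" N c] N5 h4 v5n by fastforce
      have e23: "(if edge H 2 \<inter> tri H 6 \<noteq> {} then sgn (tri_normal H 6 \<bullet> (vx H 3 - vx H 2)) else 0) +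
          (if edge H 3 \<inter> tri H 6 \<noteq> {} then sgn (tri_normal H 6 \<bullet> (vx H 4 - vx H 3)) else 0) = 0"
      proof (cases "vx H 3 \<in> tri H 6")
        case True
        have "vx H 3 \<in> edge H 2" "vx H 3 \<in> edge H 3" unfolding edge_eq by simp_all
        hence ne: "edge H 2 \<inter> tri H 6 \<noteq> {}" "edge H 3 \<inter> tri H 6 \<noteq> {}" using True by auto
        have p: "N \<bullet> (vx H 6 - vx H 5) = 0" "N \<bullet> (vx H 1 - vx H 6) = 0"
          using \<open>N \<bullet> vx H 6 = c\<close> N5 c_def by (simp_all add: inner_diff_right)
        have q1: "(tri_normal H 6 \<bullet> (vx H 3 - vx H 2)) * (N \<bullet> N) = (tri_normal H 6 \<bullet> N) * (N \<bullet> (vx H 3 - vx H 2))"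
          using par3b[OF p, of "vx H 3 - vx H 2"] unfolding n6 .
        have q2: "(tri_normal H 6 \<bullet> (vx H 4 - vx H 3)) * (N \<bullet> N) = (tri_normal H 6 \<bullet> N) * (N \<bullet> (vx H 4 - vx H 3))"
          using par3b[OF p, of "vx H 4 - vx H 3"] unfolding n6 .
        have "sgn (tri_normal H 6 \<bullet> (vx H 3 - vx H 2)) + sgn (tri_normal H 6 \<bullet> (vx H 4 - vx H 3)) = 0"
          by (rule sgn_cancel[OF q1 q2]) (use N0 N2 N3 h4 in \<open>auto simp: inner_diff_right\<close>)
        thus ?thesis using ne by simp
      next
        case False
        have "edge H 2 \<inter> tri H 6 = {}" unfolding edge_eq
          using T6 seg_eq_end2[of _ "vx H 2" "vx H 3" N c] N3 N2 False by fastforce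
        moreover have "edge H 3 \<inter> tri H 6 = {}" unfolding edge_eq
          using T6 seg_eq_end[of _ "vx H 3" "vx H 4" N c] N3 h4 False by fastforce
        ultimately show ?thesis by simp
      qed
      show ?thesis unfolding Delta_expand using z5 z6 e1 e4 e23 by simp
    qed
    thus False using D6 by simp
  qed
  have C: "N \<bullet> vx H 4 < c" if h6: "N \<bullet> vx H 6 < c"
  proof (rule ccontr)
    assume "\<not> N \<bullet> vx H 4 < c"
    hence h4: "c \<le> N \<bullet> vx H 4" by simp
    have tri4: "tri H 4 = rel_interior (convex hull {vx H 3, vx H 4, vx H 5})" unfolding tri_def by simp
    have n4: "tri_normal H 4 = cross3 (vx H 4 - vx H 3) (vx H 5 - vx H 4)" unfolding tri_normal_def by simp
    have z3: "tri_normal H 4 \<bullet> (vx H 4 - vx H 3) = 0" unfolding n4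
      using dot_cross_self(1)[of "vx H 4 - vx H 3" "vx H 5 - vx H 4"] by (simp add: inner_commute)
    have z4: "tri_normal H 4 \<bullet> (vx H 5 - vx H 4) = 0" unfolding n4
      using dot_cross_self(3)[of "vx H 4 - vx H 3" "vx H 5 - vx H 4"] by simp
    have "Delta H 4 = 0"
    proof (cases "N \<bullet> vx H 4 = c")
      case False
      hence h4': "c < N \<bullet> vx H 4" using h4 by simp
      have T4: "\<forall>x\<in>tri H 4. c < N \<bullet> x"
        unfolding tri4 using relint_gt[of _ "{vx H 3, vx H 4, vx H 5}" c N "vx H 4"] h4' N5 N3 by auto
      have e1: "edge H 1 \<inter> tri H 4 = {}" unfolding edge_eq
        using T4 seg_le[of _ "vx H 1" "vx H 2" N c] c_def N2 by fastforce
      have e2: "edge H 2 \<inter> tri H 4 = {}" unfolding edge_eq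
        using T4 seg_le[of _ "vx H 2" "vx H 3" N c] N3 N2 by fastforce
      have e5: "edge H 5 \<inter> tri H 4 = {}" unfolding edge_eq
        using T4 seg_le[of _ "vx H 5" "vx H 6" N c] N5 h6 by fastforce
      have e6: "edge H 6 \<inter> tri H 4 = {}" unfolding edge_eq
        using T4 seg_le[of _ "vx H 6" "vx H 1" N c] c_def h6 by fastforce
      show ?thesis unfolding Delta_expand using z3 z4 e1 e2 e5 e6 by simp
    next
      case True
      have T4: "\<forall>x\<in>tri H 4. N \<bullet> x = c"
        unfolding tri4 using relint_eq[of _ "{vx H 3, vx H 4, vx H 5}" N c] True N5 N3 by auto
      have "vx H 3 \<in> edge H 2" unfolding edge_eq by simp
      hence "vx H 3 \<notin> closed_segment (vx H 4) (vx H 5)" using E24 unfolding edge_eq by auto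
      hence v3n: "vx H 3 \<notin> tri H 4" unfolding tri4 by (rule vertex_notin)
      have "vx H 5 \<in> edge H 5" unfolding edge_eq by simp
      hence "vx H 5 \<notin> closed_segment (vx H 3) (vx H 4)" using E35 unfolding edge_eq by auto
      hence "vx H 5 \<notin> rel_interior (convex hull {vx H 5, vx H 3, vx H 4})" by (rule vertex_notin)
      moreover have "{vx H 5, vx H 3, vx H 4} = {vx H 3, vx H 4, vx H 5}" by auto
      ultimately have v5n: "vx H 5 \<notin> tri H 4" unfolding tri4 by simp
      have e2: "edge H 2 \<inter> tri H 4 = {}" unfolding edge_eq
        using T4 seg_eq_end2[of _ "vx H 2" "vx H 3" N c] N3 N2 v3n by fastforce
      have e5: "edge H 5 \<inter> tri H 4 = {}" unfolding edge_eq
        using T4 seg_eq_end[of _ "vx H 5" "vx H 6" N c] N5 h6 v5n by fastforce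
      have e61: "(if edge H 1 \<inter> tri H 4 \<noteq> {} then sgn (tri_normal H 4 \<bullet> (vx H 2 - vx H 1)) else 0) +
          (if edge H 6 \<inter> tri H 4 \<noteq> {} then sgn (tri_normal H 4 \<bullet> (vx H 1 - vx H 6)) else 0) = 0"
      proof (cases "vx H 1 \<in> tri H 4")
        case True
        have "vx H 1 \<in> edge H 1" "vx H 1 \<in> edge H 6" unfolding edge_eq by simp_all
        hence ne: "edge H 1 \<inter> tri H 4 \<noteq> {}" "edge H 6 \<inter> tri H 4 \<noteq> {}" using True by auto
        have p: "N \<bullet> (vx H 4 - vx H 3) = 0" "N \<bullet> (vx H 5 - vx H 4) = 0"
          using \<open>N \<bullet> vx H 4 = c\<close> N5 N3 by (simp_all add: inner_diff_right)
        have q1: "(tri_normal H 4 \<bullet> (vx H 1 - vx H 6)) * (N \<bullet> N) = (tri_normal H 4 \<bullet> N) * (N \<bullet> (vx H 1 - vx H 6))"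
          using par3b[OF p, of "vx H 1 - vx H 6"] unfolding n4 .
        have q2: "(tri_normal H 4 \<bullet> (vx H 2 - vx H 1)) * (N \<bullet> N) = (tri_normal H 4 \<bullet> N) * (N \<bullet> (vx H 2 - vx H 1))"
          using par3b[OF p, of "vx H 2 - vx H 1"] unfolding n4 .
        have "sgn (tri_normal H 4 \<bullet> (vx H 1 - vx H 6)) + sgn (tri_normal H 4 \<bullet> (vx H 2 - vx H 1)) = 0"
          by (rule sgn_cancel[OF q1 q2]) (use N0 N2 c_def h6 in \<open>auto simp: inner_diff_right\<close>)
        thus ?thesis using ne by simp
      next
        case False
        have "edge H 1 \<inter> tri H 4 = {}" unfolding edge_eq
          using T4 seg_eq_end[of _ "vx H 1" "vx H 2" N c] c_def N2 False by fastforce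
        moreover have "edge H 6 \<inter> tri H 4 = {}" unfolding edge_eq
          using T4 seg_eq_end2[of _ "vx H 6" "vx H 1" N c] c_def h6 False by fastforce
        ultimately show ?thesis by simp
      qed
      have "Delta H 4 = (if edge H 1 \<inter> tri H 4 \<noteq> {} then sgn (tri_normal H 4 \<bullet> (vx H 2 - vx H 1)) else 0) +
          (if edge H 6 \<inter> tri H 4 \<noteq> {} then sgn (tri_normal H 4 \<bullet> (vx H 1 - vx H 6)) else 0)"
        unfolding Delta_expand v7 z3 z4 e2 e5 by simp
      thus ?thesis using e61 by simp
    qed
    thus False using D4 by simp
  qed
  have h4: "N \<bullet> vx H 4 < c" and h6: "N \<bullet> vx H 6 < c" using A B C by auto
  have ezN: "ez H = N /\<^sub>R norm N" unfolding ez_def N_def Let_def ..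
  have dd: "\<And>i. i \<in> {1..6} \<Longrightarrow> dist (vx H i) (vx H (i + 1)) = 1"
    using assms(1) unfolding equilateral_hex_def by blast
  have d12: "dist (vx H 1) (vx H 2) = 1" using dd[of 1] unfolding one_add_one by simp
  have d23: "dist (vx H 2) (vx H 3) = 1" using dd[of 2] unfolding numeral_plus_one semiring_norm by simp
  have d34: "dist (vx H 3) (vx H 4) = 1" using dd[of 3] unfolding numeral_plus_one semiring_norm by simp
  have d45: "dist (vx H 4) (vx H 5) = 1" using dd[of 4] unfolding numeral_plus_one semiring_norm by simp
  have d56: "dist (vx H 5) (vx H 6) = 1" using dd[of 5] unfolding numeral_plus_one semiring_norm by simp
  have d61: "dist (vx H 6) (vx H 1) = 1" using dd[of 6] unfolding numeral_plus_one semiring_norm v7 by simp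
  have dg: "\<And>i. i \<in> {1,2,3} \<Longrightarrow> 0 < diag_len H i \<and> diag_len H i < 2"
    using assms(3) unfolding aa_defined_def by blast
  have g1: "0 < dist (vx H 1) (vx H 3) \<and> dist (vx H 1) (vx H 3) < 2" using dg[of 1] unfolding diag_len_def by simp
  have g2: "0 < dist (vx H 3) (vx H 5) \<and> dist (vx H 3) (vx H 5) < 2" using dg[of 2] unfolding diag_len_def by simp
  have g3: "0 < dist (vx H 5) (vx H 1) \<and> dist (vx H 5) (vx H 1) < 2" using dg[of 3] unfolding diag_len_def by simp
  have th1: "pi < theta H 1 \<and> theta H 1 < 2 * pi"
  proof -
    have t: "theta H 1 = (THE \<theta>. 0 \<le> \<theta> \<and> \<theta> < 2*pi \<and> vx H 2 = midpoint (vx H 1) (vx H 3) + ((1/2) * sqrt (4 - (dist (vx H 1) (vx H 3))\<^sup>2)) *\<^sub>R (cos \<theta> *\<^sub>R udir H 1 + sin \<theta> *\<^sub>R ez H))"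
      unfolding theta_def Let_def by simp
    have u: "udir H 1 = (THE u. norm u = 1 \<and> u \<bullet> ez H = 0 \<and> u \<bullet> (vx H 3 - vx H 1) = 0 \<and> u \<bullet> (vx H 5 - midpoint (vx H 1) (vx H 3)) > 0)"
      unfolding udir_def Let_def by simp
    show ?thesis unfolding t
      by (rule theta_gen[OF _ N0 ezN refl _ _ _ _ _ u])
         (use g1 d12 d23 N2 c_def in \<open>auto simp: N_def dist_commute inner_diff_right\<close>)
  qed
  have th2: "pi < theta H 2 \<and> theta H 2 < 2 * pi"
  proof -
    have t: "theta H 2 = (THE \<theta>. 0 \<le> \<theta> \<and> \<theta> < 2*pi \<and> vx H 4 = midpoint (vx H 3) (vx H 5) + ((1/2) * sqrt (4 - (dist (vx H 3) (vx H 5))\<^sup>2)) *\<^sub>R (cos \<theta> *\<^sub>R udir H 2 + sin \<theta> *\<^sub>R ez H))"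
      unfolding theta_def Let_def by simp
    have u: "udir H 2 = (THE u. norm u = 1 \<and> u \<bullet> ez H = 0 \<and> u \<bullet> (vx H 5 - vx H 3) = 0 \<and> u \<bullet> (vx H 1 - midpoint (vx H 3) (vx H 5)) > 0)"
      unfolding udir_def Let_def by simp
    have cr: "cross3 (vx H 5 - vx H 3) (vx H 1 - vx H 3) = N" unfolding N_def by (rule cyc[symmetric])
    show ?thesis unfolding t
      by (rule theta_gen[OF cr N0 ezN refl _ _ _ _ _ u])
         (use g2 d34 d45 h4 N3 in \<open>auto simp: dist_commute inner_diff_right\<close>)
  qed
  have th3: "pi < theta H 3 \<and> theta H 3 < 2 * pi"
  proof -
    have t: "theta H 3 = (THE \<theta>. 0 \<le> \<theta> \<and> \<theta> < 2*pi \<and> vx H 6 = midpoint (vx H 5) (vx H 1) + ((1/2) * sqrt (4 - (dist (vx H 5) (vx H 1))\<^sup>2)) *\<^sub>R (cos \<theta> *\<^sub>R udir H 3 + sin \<theta> *\<^sub>R ez H))"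
      unfolding theta_def Let_def by simp
    have u: "udir H 3 = (THE u. norm u = 1 \<and> u \<bullet> ez H = 0 \<and> u \<bullet> (vx H 1 - vx H 5) = 0 \<and> u \<bullet> (vx H 3 - midpoint (vx H 5) (vx H 1)) > 0)"
      unfolding udir_def Let_def by simp
    have cr: "cross3 (vx H 1 - vx H 5) (vx H 3 - vx H 5) = N" unfolding N_def
      using cyc[of "vx H 3" "vx H 1" "vx H 5"] cyc[of "vx H 5" "vx H 3" "vx H 1"] by (simp del: One_nat_def)
    show ?thesis unfolding t
      by (rule theta_gen[OF cr N0 ezN refl _ _ _ _ _ u])
         (use g3 d56 d61 h6 N5 in \<open>auto simp: dist_commute inner_diff_right\<close>)
  qed
  show ?thesis using th1 th2 th3 by auto
qed

end
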